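(* Let $m,k,\Delta \in \mathbb{Z}_{>0}$ with $m > k$. (i) If no Sauer Matrix of size $k$ is feasible for translations, then \[ h_s(m) \le 2\sum_{i=0}^{k-1}\binom{m}{i} \in \mathcal{O}(m^{k-1}). \] (ii) If no Sauer Matrix $S$ of size $k$ admits a translation vector $t \in [0,1)^k \cap (\tfrac1\Delta\mathbb{Z})^k\setminus\{\mathbf 0\}$ such that $t+S$ is totally $1$-submodular, then \[ h_s^{\Delta}(m) \le 2\sum_{i=0}^{k-1}\binom{m}{i} \in \mathcal{O}(m^{k-1}). \]
   Context: A real matrix is totally $1$-submodular if every square submatrix (of every size) has determinant of absolute value at most $1$. For $t\in\mathbb{R}^m$ and a matrix $A$ with columns $A_1,\dots,A_n$, $t+A$ is the matrix with columns $t+A_i$. The shifted Heller constant $h_s(m)$ is the maximum $n$ such that there exist $t \in [0,1)^m\setminus\{\mathbf 0\}$ and $A \in \{-1,0,1\}^{m\times n}$ with pairwise distinct columns such that $t+A$ is totally $1$-submodular; for an integer $\delta\ge2$, $h_s^\delta(m)$ is defined the same way but with $t \in [0,1)^m\cap(\tfrac1\delta\mathbb{Z})^m\setminus\{\mathbf 0\}$ (in (ii) the quantity $h_s^{\Delta}(m)$ is thus meant for $\Delta\ge 2$). A Sauer Matrix of size $k$ is a matrix $S\in\{-1,0,1\}^{k\times 2^k}$ whose columns have pairwise distinct supports, so that every subset of $[k]$ is the support (set of nonzero coordinates) of exactly one column, the nonzero entries being arbitrary elements of $\{-1,1\}$. A vector $r\in[0,1)^k$ is feasible for $S$ if $r+S$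 is totally $1$-submodular; $S$ is feasible for translations if some $r\in[0,1)^k$ is feasible for $S$. *)

theory Defs
  imports "Jordan_Normal_Form.Determinant" "Jordan_Normal_Form.DL_Submatrix"
          "HOL-Library.Landau_Symbols"
begin

definition totally_1_submodular :: "real mat \<Rightarrow> bool" where
  "totally_1_submodular M \<longleftrightarrow>
     (\<forall>I J. I \<subseteq> {..<dim_row M} \<longrightarrow> J \<subseteq> {..<dim_col M} \<longrightarrow> card I = card J \<longrightarrow>
        \<bar>det (submatrix M I J)\<bar> \<le> 1)"

definition translate :: "real vec \<Rightarrow> real mat \<Rightarrow> real mat" where
  "translate t A = mat (dim_row A) (dim_col A) (\<lambda>(i,j). t $ i + A $$ (i,j))"

definition ternary_mat :: "nat \<Rightarrow> nat \<Rightarrow> real mat \<Rightarrow> bool" where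
  "ternary_mat m n A \<longleftrightarrow> A \<in> carrier_mat m n \<and>
     (\<forall>i<m. \<forall>j<n. A $$ (i,j) \<in> {-1, 0, 1})"

definition distinct_columns :: "real mat \<Rightarrow> bool" where
  "distinct_columns A \<longleftrightarrow> (\<forall>j1<dim_col A. \<forall>j2<dim_col A. j1 \<noteq> j2 \<longrightarrow> col A j1 \<noteq> col A j2)"

definition unit_box :: "nat \<Rightarrow> real vec set" where
  "unit_box m = {t. dim_vec t = m \<and> (\<forall>i<m. 0 \<le> t $ i \<and> t $ i < 1)}"

definition grid :: "nat \<Rightarrow> nat \<Rightarrow> real vec set" where
  "grid \<delta> m = {t. dim_vec t = m \<and> (\<forall>i<m. \<exists>z::int. t $ i = real_of_int z / real \<delta>)}"

definition shifted_heller :: "nat \<Rightarrow> nat" ("h\<^sub>s") where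
  "h\<^sub>s m = Max {n. \<exists>t A. t \<in> unit_box m \<and> t \<noteq> 0\<^sub>v m \<and> ternary_mat m n A \<and>
                     distinct_columns A \<and> totally_1_submodular (translate t A)}"

definition shifted_heller_delta :: "nat \<Rightarrow> nat \<Rightarrow> nat" where
  "shifted_heller_delta \<delta> m = Max {n. \<exists>t A. t \<in> unit_box m \<inter> grid \<delta> m \<and> t \<noteq> 0\<^sub>v m \<and>
                     ternary_mat m n A \<and> distinct_columns A \<and> totally_1_submodular (translate t A)}"

definition col_support :: "real mat \<Rightarrow> nat \<Rightarrow> nat set" where
  "col_support S j = {i. i < dim_row S \<and> S $$ (i,j) \<noteq> 0}"

definition sauer_matrix :: "nat \<Rightarrow> real mat \<Rightarrow> bool" where
  "sauer_matrix k S \<longleftrightarrow> ternary_mat k (2^k) S \<and>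
     bij_betw (col_support S) {..<2^k} (Pow {..<k})"

definition feasible :: "real vec \<Rightarrow> real mat \<Rightarrow> bool" where
  "feasible r S \<longleftrightarrow> r \<in> unit_box (dim_row S) \<and> totally_1_submodular (translate r S)"

definition feasible_for_translations :: "real mat \<Rightarrow> bool" where
  "feasible_for_translations S \<longleftrightarrow> (\<exists>r. feasible r S)"

end

theory Submission
  imports Defs
begin


lemma det2:
  assumes "(A::real mat) \<in> carrier_mat 2 2"
  shows "det A = A$$(0,0)*A$$(1,1) - A$$(0,1)*A$$(1,0)"
proof -
  have "det A = (\<Sum>j<2. A $$ (0,j) * cofactor A 0 j)"
    using laplace_expansion_row[OF assms, of 0] by simp
  also have "\<dots> = A$$(0,0)*A$$(1,1) - A$$(0,1)*A$$(1,0)"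
    using assms
    by (simp add: numeral_2_eq_2 cofactor_def det_single mat_delete_carrier mat_delete_def)
  finally show ?thesis .
qed

lemma det2m: "det (mat (Suc (Suc 0)) (Suc (Suc 0)) f) = f (0,0) * f (1,1) - f (0,1) * (f (1,0 :: nat) :: real)"
  by (subst det2, auto)

lemma det3:
  assumes "(A::real mat) \<in> carrier_mat 3 3"
  shows "det A = A$$(0,0)*(A$$(1,1)*A$$(2,2) - A$$(1,2)*A$$(2,1))
               - A$$(0,1)*(A$$(1,0)*A$$(2,2) - A$$(1,2)*A$$(2,0))
               + A$$(0,2)*(A$$(1,0)*A$$(2,1) - A$$(1,1)*A$$(2,0))"
proof -
  have "det A = (\<Sum>j<3. A $$ (0,j) * cofactor A 0 j)"
    using laplace_expansion_row[OF assms, of 0] by simp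
  also have "\<dots> = A$$(0,0)*(A$$(1,1)*A$$(2,2) - A$$(1,2)*A$$(2,1))
               - A$$(0,1)*(A$$(1,0)*A$$(2,2) - A$$(1,2)*A$$(2,0))
               + A$$(0,2)*(A$$(1,0)*A$$(2,1) - A$$(1,1)*A$$(2,0))"
    using assms
    by (simp add: numeral_3_eq_3 numeral_2_eq_2 cofactor_def det2m mat_delete_carrier mat_delete_def algebra_simps)
  finally show ?thesis .
qed

lemma card_rows_sub: "I \<subseteq> {..<n} \<Longrightarrow> card {i. i < n \<and> i \<in> I} = card I"
  by (metis (no_types, lifting) Collect_cong Collect_mem_eq lessThan_iff subset_eq)

lemma pick_mono_iff:
  assumes "b < card I" "c < card I"
  shows "pick I b < pick I c \<longleftrightarrow> b < c"
  by (metis assms linorder_neq_iff order_less_asym pick_mono_le)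

lemma pick_inj: "inj_on (pick I) {..<card I}"
  by (rule inj_onI) (metis lessThan_iff linorder_neq_iff pick_mono_le order_less_irrefl)

lemma pick_comp:
  assumes "I' \<subseteq> {..<card I}" "i < card I'"
  shows "pick (pick I ` I') i = pick I (pick I' i)"
proof -
  define x where "x = pick I (pick I' i)"
  have pi: "pick I' i \<in> I'" using pick_in_set_le assms(2) by blast
  hence pic: "pick I' i < card I" using assms(1) by auto
  have fI': "finite I'" using assms(1) finite_subset by blast
  have "{a \<in> pick I ` I'. a < x} = pick I ` {b \<in> I'. b < pick I' i}"
  proof -
    have mono: "\<And>b. b \<in> I' \<Longrightarrow> pick I b < x \<longleftrightarrow> b < pick I' i"
      using pick_mono_iff pic assms(1) x_def by auto
    show ?thesis using mono by auto
  qed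
  moreover have "card (pick I ` {b \<in> I'. b < pick I' i}) = card {b \<in> I'. b < pick I' i}"
    by (rule card_image, rule inj_on_subset[OF pick_inj], use assms(1) in auto)
  moreover have "card {b \<in> I'. b < pick I' i} = i" using card_pick_le assms(2) by blast
  ultimately have "card {a \<in> pick I ` I'. a < x} = i" by simp
  moreover have "x \<in> pick I ` I'" using pi x_def by auto
  ultimately show ?thesis using pick_card_in_set x_def by metis
qed

lemma sub_sub:
  assumes "I \<subseteq> {..<dim_row M}" "J \<subseteq> {..<dim_col M}"
    "I' \<subseteq> {..<card I}" "J' \<subseteq> {..<card J}"
  shows "submatrix (submatrix M I J) I' J' = submatrix M (pick I ` I') (pick J ` J')"
proof -
  have dI: "dim_row (submatrix M I J) = card I" using assms(1) by (simp add: dim_submatrix card_rows_sub)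
  have dJ: "dim_col (submatrix M I J) = card J" using assms(2) by (simp add: dim_submatrix card_rows_sub)
  have cI: "card (pick I ` I') = card I'"
    by (rule card_image, rule inj_on_subset[OF pick_inj], use assms(3) in auto)
  have cJ: "card (pick J ` J') = card J'"
    by (rule card_image, rule inj_on_subset[OF pick_inj], use assms(4) in auto)
  have fI: "finite I" using assms(1) finite_subset by blast
  have fJ: "finite J" using assms(2) finite_subset by blast
  have sI: "pick I ` I' \<subseteq> {..<dim_row M}"
  proof
    fix x assume "x \<in> pick I ` I'"
    then obtain b where "b \<in> I'" "x = pick I b" by auto
    hence "x \<in> I" using pick_in_set_le assms(3) by auto
    thus "x \<in> {..<dim_row M}" using assms(1) by auto
  qed
  have sJ: "pick J ` J' \<subseteq> {..<dim_col M}"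
  proof
    fix x assume "x \<in> pick J ` J'"
    then obtain b where "b \<in> J'" "x = pick J b" by auto
    hence "x \<in> J" using pick_in_set_le assms(4) by auto
    thus "x \<in> {..<dim_col M}" using assms(2) by auto
  qed
  show ?thesis
  proof (rule eq_matI)
    show r: "dim_row (submatrix (submatrix M I J) I' J') = dim_row (submatrix M (pick I ` I') (pick J ` J'))"
      using assms cI sI by (simp add: dim_submatrix card_rows_sub dI)
    show c: "dim_col (submatrix (submatrix M I J) I' J') = dim_col (submatrix M (pick I ` I') (pick J ` J'))"
      using assms cJ sJ by (simp add: dim_submatrix card_rows_sub dJ)
    fix i j assume i: "i < dim_row (submatrix M (pick I ` I') (pick J ` J'))"
      and j: "j < dim_col (submatrix M (pick I ` I') (pick J ` J'))"
    have i': "i < card I'" using i sI cI by (simp add: dim_submatrix card_rows_sub)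
    have j': "j < card J'" using j sJ cJ by (simp add: dim_submatrix card_rows_sub)
    have pi: "pick I' i < card I" using pick_in_set_le[OF i'] assms(3) by auto
    have pj: "pick J' j < card J" using pick_in_set_le[OF j'] assms(4) by auto
    have "submatrix (submatrix M I J) I' J' $$ (i,j) = submatrix M I J $$ (pick I' i, pick J' j)"
      by (rule submatrix_index, simp_all add: dI dJ card_rows_sub[OF assms(3)] card_rows_sub[OF assms(4)] i' j')
    also have "\<dots> = M $$ (pick I (pick I' i), pick J (pick J' j))"
      using submatrix_index[of "pick I' i" M I "pick J' j" J] pi pj card_rows_sub[OF assms(1)] card_rows_sub[OF assms(2)] by simp
    also have "\<dots> = submatrix M (pick I ` I') (pick J ` J') $$ (i,j)"
      using submatrix_index[of i M "pick I ` I'" j "pick J ` J'"] i j pick_comp[OF assms(3) i'] pick_comp[OF assms(4) j'] by (simp add: dim_submatrix)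
    finally show "submatrix (submatrix M I J) I' J' $$ (i,j) = submatrix M (pick I ` I') (pick J ` J') $$ (i,j)" .
  qed
qed

lemma t1s_sub:
  assumes "totally_1_submodular M" "I \<subseteq> {..<dim_row M}" "J \<subseteq> {..<dim_col M}"
  shows "totally_1_submodular (submatrix M I J)"
  unfolding totally_1_submodular_def
proof (intro allI impI)
  fix I' J' assume a: "I' \<subseteq> {..<dim_row (submatrix M I J)}" "J' \<subseteq> {..<dim_col (submatrix M I J)}" "card I' = card J'"
  have dI: "dim_row (submatrix M I J) = card I" using assms(2) by (simp add: dim_submatrix card_rows_sub)
  have dJ: "dim_col (submatrix M I J) = card J" using assms(3) by (simp add: dim_submatrix card_rows_sub)
  have a1: "I' \<subseteq> {..<card I}" "J' \<subseteq> {..<card J}" using a dI dJ by auto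
  have cI: "card (pick I ` I') = card I'"
    by (rule card_image, rule inj_on_subset[OF pick_inj], use a1 in auto)
  have cJ: "card (pick J ` J') = card J'"
    by (rule card_image, rule inj_on_subset[OF pick_inj], use a1 in auto)
  have sI: "pick I ` I' \<subseteq> {..<dim_row M}" using pick_in_set_le a1(1) assms(2) by fastforce
  have sJ: "pick J ` J' \<subseteq> {..<dim_col M}" using pick_in_set_le a1(2) assms(3) by fastforce
  show "\<bar>det (submatrix (submatrix M I J) I' J')\<bar> \<le> 1"
    unfolding sub_sub[OF assms(2,3) a1]
    using assms(1) sI sJ cI cJ a(3) unfolding totally_1_submodular_def by auto
qed


declare pick.simps[simp del]
lemma pick2: assumes "a < (b::nat)" shows "pick {a,b} 0 = a" "pick {a,b} (Suc 0) = b"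
proof -
  have e: "{x \<in> {a,b}. x < a} = {}" using assms by auto
  have "pick {a,b} (card {x \<in> {a,b}. x < a}) = a" by (rule pick_card_in_set) simp
  thus "pick {a,b} 0 = a" unfolding e card.empty .
  have e2: "{x \<in> {a,b}. x < b} = {a}" and c: "card {a} = Suc 0" using assms by auto
  have "pick {a,b} (card {x \<in> {a,b}. x < b}) = b" by (rule pick_card_in_set) simp
  thus "pick {a,b} (Suc 0) = b" unfolding e2 c .
qed

lemma pick3: assumes "a < (b::nat)" "b < c" shows "pick {a,b,c} 0 = a" "pick {a,b,c} (Suc 0) = b"
   "pick {a,b,c} (Suc (Suc 0)) = c"
proof -
  have e: "{x \<in> {a,b,c}. x < a} = {}" using assms by auto
  have "pick {a,b,c} (card {x \<in> {a,b,c}. x < a}) = a" by (rule pick_card_in_set) simp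
  thus "pick {a,b,c} 0 = a" unfolding e card.empty .
  have e2: "{x \<in> {a,b,c}. x < b} = {a}" and c: "card {a} = Suc 0" using assms by auto
  have "pick {a,b,c} (card {x \<in> {a,b,c}. x < b}) = b" by (rule pick_card_in_set) simp
  thus "pick {a,b,c} (Suc 0) = b" unfolding e2 c .
  have e3: "{x \<in> {a,b,c}. x < c} = {a,b}" and c3: "card {a,b} = Suc (Suc 0)" using assms by auto
  have "pick {a,b,c} (card {x \<in> {a,b,c}. x < c}) = c" by (rule pick_card_in_set) simp
  thus "pick {a,b,c} (Suc (Suc 0)) = c" unfolding e3 c3 .
qed

lemma sub2:
  assumes "a < b" "b < dim_row M" "p < q" "q < dim_col M"
  shows "det (submatrix M {a,b} {p,q}) = (M $$ (a,p) * M $$ (b,q) - M $$ (a,q) * M $$ (b,p) :: real)"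
proof -
  have cr: "card {x. x < dim_row M \<and> x \<in> {a,b}} = 2" by (subst card_rows_sub; use assms in auto)
  have cc: "card {x. x < dim_col M \<and> x \<in> {p,q}} = 2" by (subst card_rows_sub; use assms in auto)
  have idx: "\<And>u v. u < 2 \<Longrightarrow> v < 2 \<Longrightarrow> submatrix M {a,b} {p,q} $$ (u,v) = M $$ (pick {a,b} u, pick {p,q} v)"
    by (rule submatrix_index) (simp_all only: cr cc)
  have "submatrix M {a,b} {p,q} \<in> carrier_mat 2 2" by (rule carrier_matI) (simp_all only: dim_submatrix cr cc)
  hence "det (submatrix M {a,b} {p,q}) = submatrix M {a,b} {p,q} $$ (0,0) * submatrix M {a,b} {p,q} $$ (1,1)
     - submatrix M {a,b} {p,q} $$ (0,1) * submatrix M {a,b} {p,q} $$ (1,0)" by (rule det2)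
  also have "\<dots> = M $$ (pick {a,b} 0, pick {p,q} 0) * M $$ (pick {a,b} (Suc 0), pick {p,q} (Suc 0))
     - M $$ (pick {a,b} 0, pick {p,q} (Suc 0)) * M $$ (pick {a,b} (Suc 0), pick {p,q} 0)"
    using idx by simp
  finally show ?thesis unfolding pick2[OF assms(1)] pick2[OF assms(3)] .
qed

definition D3 :: "real mat \<Rightarrow> nat \<Rightarrow> nat \<Rightarrow> nat \<Rightarrow> nat \<Rightarrow> nat \<Rightarrow> nat \<Rightarrow> real" where
  "D3 M a b c p q r = M$$(a,p)*(M$$(b,q)*M$$(c,r) - M$$(b,r)*M$$(c,q))
               - M$$(a,q)*(M$$(b,p)*M$$(c,r) - M$$(b,r)*M$$(c,p))
               + M$$(a,r)*(M$$(b,p)*M$$(c,q) - M$$(b,q)*M$$(c,p))"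

lemma sub3:
  assumes "a < b" "b < c" "c < dim_row M" "p < q" "q < r" "r < dim_col M"
  shows "det (submatrix M {a,b,c} {p,q,r}) = D3 M a b c p q r"
proof -
  have cr: "card {x. x < dim_row M \<and> x \<in> {a,b,c}} = 3" by (subst card_rows_sub; use assms in auto)
  have cc: "card {x. x < dim_col M \<and> x \<in> {p,q,r}} = 3" by (subst card_rows_sub; use assms in auto)
  have idx: "\<And>u v. u < 3 \<Longrightarrow> v < 3 \<Longrightarrow> submatrix M {a,b,c} {p,q,r} $$ (u,v) = M $$ (pick {a,b,c} u, pick {p,q,r} v)"
    by (rule submatrix_index) (simp_all only: cr cc)
  have "submatrix M {a,b,c} {p,q,r} \<in> carrier_mat 3 3" by (rule carrier_matI) (simp_all only: dim_submatrix cr cc)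
  note d = det3[OF this]
  have i: "\<And>u v. u < 3 \<Longrightarrow> v < 3 \<Longrightarrow> submatrix M {a,b,c} {p,q,r} $$ (u,v) = M $$ ([a,b,c] ! u, [p,q,r] ! v)"
  proof -
    fix u v :: nat assume "u < 3" "v < 3"
    moreover have "pick {a,b,c} u = [a,b,c] ! u" if "u < 3" for u
      using that pick3[OF assms(1,2)] by (cases u; cases "u - 1"; auto simp: numeral_3_eq_3 less_Suc_eq)
    moreover have "pick {p,q,r} v = [p,q,r] ! v" if "v < 3" for v
      using that pick3[OF assms(4,5)] by (cases v; cases "v - 1"; auto simp: numeral_3_eq_3 less_Suc_eq)
    ultimately show "submatrix M {a,b,c} {p,q,r} $$ (u,v) = M $$ ([a,b,c] ! u, [p,q,r] ! v)" using idx by simp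
  qed
  show ?thesis unfolding d D3_def by (simp add: i)
qed
lemma sub1:
  assumes "i < dim_row M" "j < dim_col M"
  shows "det (submatrix M {i} {j}) = (M $$ (i,j) :: real)"
proof -
  have c: "card {x. x < dim_row M \<and> x \<in> {i}} = 1" "card {x. x < dim_col M \<and> x \<in> {j}} = 1"
    using card_rows_sub[of "{i}" "dim_row M"] card_rows_sub[of "{j}" "dim_col M"] assms by auto
  have e: "{x \<in> {i}. x < i} = {}" "{x \<in> {j}. x < j} = {}" by auto
  have "pick {i} (card {x \<in> {i}. x < i}) = i" by (rule pick_card_in_set) simp
  hence p1: "pick {i} 0 = i" unfolding e card.empty .
  have "pick {j} (card {x \<in> {j}. x < j}) = j" by (rule pick_card_in_set) simp
  hence p2: "pick {j} 0 = j" unfolding e card.empty .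
  have "submatrix M {i} {j} \<in> carrier_mat 1 1" by (rule carrier_matI) (simp_all only: dim_submatrix c)
  hence "det (submatrix M {i} {j}) = submatrix M {i} {j} $$ (0,0)" by (rule det_single)
  also have "\<dots> = M $$ (pick {i} 0, pick {j} 0)" by (rule submatrix_index) (subst card_rows_sub; use assms in auto)+
  finally show ?thesis unfolding p1 p2 .
qed
lemma T1:
  assumes "totally_1_submodular M" "i < dim_row M" "j < dim_col M"
  shows "\<bar>M $$ (i,j)\<bar> \<le> 1"
proof -
  have "\<bar>det (submatrix M {i} {j})\<bar> \<le> 1"
    using assms by (intro assms(1)[unfolded totally_1_submodular_def, rule_format]) auto
  thus ?thesis using sub1[OF assms(2,3)] by simp
qed

lemma T2s:
  assumes "totally_1_submodular M" "a < b" "b < dim_row M" "p < q" "q < dim_col M"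
  shows "\<bar>M $$ (a,p) * M $$ (b,q) - M $$ (a,q) * M $$ (b,p)\<bar> \<le> 1"
proof -
  have "\<bar>det (submatrix M {a,b} {p,q})\<bar> \<le> 1"
    using assms(1) unfolding totally_1_submodular_def
    using assms by (intro assms(1)[unfolded totally_1_submodular_def, rule_format]) auto
  thus ?thesis using sub2[OF assms(2-5)] by simp
qed

lemma absd1: "\<bar>x*y - z*w\<bar> \<le> (1::real) \<Longrightarrow> \<bar>z*w - x*y\<bar> \<le> 1"
  by (simp add: abs_minus_commute)
lemma absd2: "\<bar>x*y - z*w\<bar> \<le> (1::real) \<Longrightarrow> \<bar>y*x - w*z\<bar> \<le> 1"
  by (simp add: mult.commute)

lemma T2:
  assumes "totally_1_submodular M" "a \<noteq> b" "a < dim_row M" "b < dim_row M" "p \<noteq> q" "p < dim_col M" "q < dim_col M"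
  shows "\<bar>M $$ (a,p) * M $$ (b,q) - M $$ (a,q) * M $$ (b,p)\<bar> \<le> 1"
proof (cases "a < b")
  case True
  then show ?thesis
  proof (cases "p < q")
    case True
    then show ?thesis using T2s[OF assms(1) \<open>a<b\<close>] assms by auto
  next
    case False
    then have "q < p" using assms by auto
    then show ?thesis using T2s[OF assms(1) \<open>a<b\<close> _ \<open>q<p\<close>] assms absd1 by blast
  qed
next
  case False
  then have ba: "b < a" using assms by auto
  then show ?thesis
  proof (cases "p < q")
    case True
    then show ?thesis using T2s[OF assms(1) ba _ True] assms absd1 absd2 by blast
  next
    case False
    then have "q < p" using assms by auto
    then show ?thesis using T2s[OF assms(1) ba _ \<open>q<p\<close>] assms absd2 by blast
  qed
qed

lemma T3s:
  assumes "totally_1_submodular M" "a < b" "b < c" "c < dim_row M" "p < q" "q < r" "r < dim_col M"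
  shows "\<bar>D3 M a b c p q r\<bar> \<le> 1"
proof -
  have "card {a,b,c} = 3" "card {p,q,r} = 3" using assms by auto
  hence "\<bar>det (submatrix M {a,b,c} {p,q,r})\<bar> \<le> 1"
    using assms by (intro assms(1)[unfolded totally_1_submodular_def, rule_format]) auto
  thus ?thesis using sub3[OF assms(2-7)] by simp
qed

lemma D3_swap12: "D3 M a b c q p r = - D3 M a b c p q r" unfolding D3_def by (simp add: algebra_simps)
lemma D3_swap23: "D3 M a b c p r q = - D3 M a b c p q r" unfolding D3_def by (simp add: algebra_simps)

lemma D3a12: "\<bar>D3 M a b c q p r\<bar> = \<bar>D3 M a b c p q r\<bar>" using D3_swap12[of M a b c p q r] by simp
lemma D3a23: "\<bar>D3 M a b c p r q\<bar> = \<bar>D3 M a b c p q r\<bar>" using D3_swap23[of M a b c p q r] by simp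

lemma T3:
  assumes "totally_1_submodular M" "a < b" "b < c" "c < dim_row M"
    "p \<noteq> q" "q \<noteq> r" "p \<noteq> r" "p < dim_col M" "q < dim_col M" "r < dim_col M"
  shows "\<bar>D3 M a b c p q r\<bar> \<le> 1"
proof -
  have k: "\<And>p q r. p < q \<Longrightarrow> q < r \<Longrightarrow> r < dim_col M \<Longrightarrow> \<bar>D3 M a b c p q r\<bar> \<le> 1"
    using T3s[OF assms(1-4)] by blast
  consider "p<q" "q<r" | "p<r" "r<q" | "q<p" "p<r" | "q<r" "r<p" | "r<p" "p<q" | "r<q" "q<p"
    using assms(5-7) by linarith
  then show ?thesis
  proof cases
    case 1 then show ?thesis using k assms by auto
  next
    case 2 then show ?thesis using k[of p r q] assms D3a23[of M a b c p q r] by linarith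
  next
    case 3 then show ?thesis using k[of q p r] assms D3a12[of M a b c p q r] by linarith
  next
    case 4 then show ?thesis using k[of q r p] assms D3a12[of M a b c p q r] D3a23[of M a b c q p r] by linarith
  next
    case 5 then show ?thesis using k[of r p q] assms D3a23[of M a b c p q r] D3a12[of M a b c p r q] by linarith
  next
    case 6 then show ?thesis using k[of r q p] assms D3a12[of M a b c p q r] D3a23[of M a b c q p r]
       D3a12[of M a b c q r p] by linarith
  qed
qed

definition shatters :: "'a set set \<Rightarrow> 'a set \<Rightarrow> bool" where
  "shatters F K \<longleftrightarrow> (\<forall>T\<subseteq>K. \<exists>S\<in>F. S \<inter> K = T)"

lemma shatters_mono: "shatters F K \<Longrightarrow> K' \<subseteq> K \<Longrightarrow> shatters F K'"
  unfolding shatters_def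
proof (intro allI impI)
  fix T assume a: "\<forall>T\<subseteq>K. \<exists>S\<in>F. S \<inter> K = T" "K' \<subseteq> K" "T \<subseteq> K'"
  then obtain S where "S \<in> F" "S \<inter> K = T" by (meson order_trans)
  thus "\<exists>S\<in>F. S \<inter> K' = T" using a by blast
qed

lemma pajor:
  assumes "finite X"
  shows "F \<subseteq> Pow X \<Longrightarrow> card F \<le> card {K. K \<subseteq> X \<and> shatters F K}"
  using assms
proof (induction X arbitrary: F rule: finite_induct)
  case empty
  then have "F = {} \<or> F = {{}}" by auto
  then show ?case
  proof
    assume "F = {}" thus ?thesis by simp
  next
    assume F: "F = {{}}"
    have "shatters F {}" unfolding shatters_def F by auto
    hence "{K. K \<subseteq> {} \<and> shatters F K} = {{}}" by auto
    thus ?thesis using F by simp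
  qed
next
  case (insert x X F)
  define Fa where "Fa = {S\<in>F. x \<notin> S}"
  define Fb where "Fb = {S\<in>F. x \<in> S}"
  define G where "G = (\<lambda>S. S - {x}) ` Fb"
  define F1 where "F1 = Fa \<union> G"
  define F2 where "F2 = Fa \<inter> G"
  have finF: "finite F" using insert.prems insert.hyps(1) by (meson finite_Pow_iff finite_insert finite_subset)
  have F1X: "F1 \<subseteq> Pow X" unfolding F1_def Fa_def G_def Fb_def using insert.prems by auto
  have F2X: "F2 \<subseteq> Pow X" using F1X unfolding F1_def F2_def by auto
  have cF: "card F = card Fa + card Fb"
  proof -
    have "F = Fa \<union> Fb" "Fa \<inter> Fb = {}" unfolding Fa_def Fb_def by auto
    thus ?thesis using finF card_Un_disjoint[of Fa Fb] by (metis finite_Un)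
  qed
  have cG: "card G = card Fb"
    unfolding G_def
  proof (rule card_image, rule inj_onI)
    fix A B assume "A \<in> Fb" "B \<in> Fb" "A - {x} = B - {x}"
    thus "A = B" unfolding Fb_def by (metis (no_types, lifting) insert_Diff mem_Collect_eq)
  qed
  have finFa: "finite Fa" "finite G" unfolding Fa_def G_def Fb_def using finF by simp_all
  have c12: "card F1 + card F2 = card F"
    unfolding F1_def F2_def using card_Un_Int[OF finFa] cF cG by simp
  define Sh where "Sh = (\<lambda>(H::'a set set) Y. {K. K \<subseteq> Y \<and> shatters H K})"
  have ih1: "card F1 \<le> card (Sh F1 X)" using insert.IH[OF F1X] unfolding Sh_def .
  have ih2: "card F2 \<le> card (Sh F2 X)" using insert.IH[OF F2X] unfolding Sh_def .
  have s1: "Sh F1 X \<subseteq> Sh F (insert x X)"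
  proof
    fix K assume "K \<in> Sh F1 X"
    hence K: "K \<subseteq> X" "shatters F1 K" unfolding Sh_def by simp_all
    have "x \<notin> K" using K insert.hyps(2) by auto
    have "shatters F K" unfolding shatters_def
    proof (intro allI impI)
      fix T assume "T \<subseteq> K"
      then obtain S where S: "S \<in> F1" "S \<inter> K = T" using K(2) unfolding shatters_def by blast
      show "\<exists>S\<in>F. S \<inter> K = T"
      proof (cases "S \<in> Fa")
        case True thus ?thesis using S unfolding Fa_def by auto
      next
        case False
        then obtain S0 where "S0 \<in> Fb" "S = S0 - {x}" using S unfolding F1_def G_def by auto
        thus ?thesis using S \<open>x \<notin> K\<close> unfolding Fb_def by (intro bexI[of _ S0]) auto
      qed
    qed
    thus "K \<in> Sh F (insert x X)" using K unfolding Sh_def by auto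
  qed
  have s2: "insert x ` Sh F2 X \<subseteq> Sh F (insert x X)"
  proof
    fix K' assume "K' \<in> insert x ` Sh F2 X"
    then obtain K where K: "K \<subseteq> X" "shatters F2 K" "K' = insert x K" unfolding Sh_def by auto
    have "x \<notin> K" using K insert.hyps(2) by auto
    have "shatters F (insert x K)" unfolding shatters_def
    proof (intro allI impI)
      fix T assume T: "T \<subseteq> insert x K"
      then obtain S where S: "S \<in> F2" "S \<inter> K = T - {x}" using K unfolding shatters_def
        by (metis Diff_subset_conv insert_is_Un)
      have SF: "S \<in> F" "x \<notin> S" using S unfolding F2_def Fa_def by auto
      obtain S0 where S0: "S0 \<in> Fb" "S = S0 - {x}" using S unfolding F2_def G_def by auto
      have S0F: "S0 \<in> F" "S0 = insert x S" using S0 unfolding Fb_def by auto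
      show "\<exists>S\<in>F. S \<inter> insert x K = T"
      proof (cases "x \<in> T")
        case True
        then show ?thesis using S0F S T by (intro bexI[of _ S0]) auto
      next
        case False
        then show ?thesis using SF S T by (intro bexI[of _ S]) auto
      qed
    qed
    thus "K' \<in> Sh F (insert x X)" using K unfolding Sh_def by auto
  qed
  have fin: "finite (Sh F (insert x X))" unfolding Sh_def using insert.hyps(1)
    by (simp add: finite_subset[of _ "Pow (insert x X)"] subset_iff)
  have disj: "Sh F1 X \<inter> insert x ` Sh F2 X = {}" using insert.hyps(2) unfolding Sh_def by auto
  have inj: "inj_on (insert x) (Sh F2 X)"
  proof (rule inj_onI)
    fix A B assume AB: "A \<in> Sh F2 X" "B \<in> Sh F2 X" "insert x A = insert x B"
    then have "x \<notin> A" "x \<notin> B" using insert.hyps(2) unfolding Sh_def by auto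
    thus "A = B" using AB(3) by (metis Diff_insert_absorb)
  qed
  have "card (Sh F1 X) + card (Sh F2 X) = card (Sh F1 X \<union> insert x ` Sh F2 X)"
    using card_Un_disjoint[OF finite_subset[OF s1 fin] finite_subset[OF s2 fin] disj] card_image[OF inj]
    by simp
  also have "\<dots> \<le> card (Sh F (insert x X))" using s1 s2 fin by (intro card_mono) auto
  finally show ?case using ih1 ih2 c12 unfolding Sh_def by simp
qed

lemma card_small_subsets:
  assumes "finite X"
  shows "card {K. K \<subseteq> X \<and> card K < k} = (\<Sum>i<k. card X choose i)"
proof -
  have e: "{K. K \<subseteq> X \<and> card K < k} = (\<Union>i<k. {K. K \<subseteq> X \<and> card K = i})" by auto
  have "card (\<Union>i<k. {K. K \<subseteq> X \<and> card K = i}) = (\<Sum>i<k. card {K. K \<subseteq> X \<and> card K = i})"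
    by (rule card_UN_disjoint) (use assms in auto)
  also have "\<dots> = (\<Sum>i<k. card X choose i)" using n_subsets[OF assms] by simp
  finally show ?thesis using e by simp
qed

lemma sauer_shelah:
  assumes "finite X" "F \<subseteq> Pow X" "card F > (\<Sum>i<k. card X choose i)"
  shows "\<exists>K. K \<subseteq> X \<and> card K = k \<and> shatters F K"
proof (rule ccontr)
  assume na: "\<not> ?thesis"
  have "{K. K \<subseteq> X \<and> shatters F K} \<subseteq> {K. K \<subseteq> X \<and> card K < k}"
  proof safe
    fix K assume K: "K \<subseteq> X" "shatters F K"
    show "card K < k"
    proof (rule ccontr)
      assume "\<not> card K < k"
      then obtain K' where "K' \<subseteq> K" "card K' = k" by (meson not_less obtain_subset_with_card_n)
      thus False using na K shatters_mono by blast
    qed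
  qed
  hence "card {K. K \<subseteq> X \<and> shatters F K} \<le> card {K. K \<subseteq> X \<and> card K < k}"
    by (rule card_mono[rotated]) (use assms(1) in simp)
  thus False using pajor[OF assms(1,2)] card_small_subsets[OF assms(1), of k] assms(3) by simp
qed

lemma translate_dims: "dim_row (translate t A) = dim_row A" "dim_col (translate t A) = dim_col A"
  unfolding translate_def by simp_all

lemma translate_index: "i < dim_row A \<Longrightarrow> j < dim_col A \<Longrightarrow> translate t A $$ (i,j) = t $ i + A $$ (i,j)"
  unfolding translate_def by simp

lemma tern_vals:
  assumes "ternary_mat m n A" "i < m" "j < n"
  shows "A $$ (i,j) = -1 \<or> A $$ (i,j) = 0 \<or> A $$ (i,j) = 1"
  using assms unfolding ternary_mat_def by auto

lemma tern_dims: "ternary_mat m n A \<Longrightarrow> dim_row A = m \<and> dim_col A = n"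
  unfolding ternary_mat_def by auto

lemma abs2: "\<bar>u\<bar> = 1 \<Longrightarrow> \<bar>v\<bar> = 1 \<Longrightarrow> \<bar>u*v + u*v\<bar> = (2::real)"
proof -
  assume "\<bar>u\<bar> = 1" "\<bar>v\<bar> = 1"
  hence "\<bar>u*v\<bar> = 1" by (simp add: abs_mult)
  thus ?thesis by linarith
qed


lemma pmeq: "\<bar>p\<bar> = 1 \<Longrightarrow> \<bar>q\<bar> = 1 \<Longrightarrow> \<bar>p - q\<bar> \<le> 1 \<Longrightarrow> p = (q::real)"
  by (cases "p \<ge> 0"; cases "q \<ge> 0") (auto simp: abs_if split: if_splits)

lemma sq1: "\<bar>u\<bar> = 1 \<Longrightarrow> u * u = (1::real)"
  by (metis abs_mult_self_eq mult.right_neutral)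

lemma prod_eq: "xa * fb = fa * xb \<Longrightarrow> \<bar>xb\<bar> = 1 \<Longrightarrow> \<bar>fb\<bar> = 1 \<Longrightarrow> xa * xb = fa * (fb::real)"
proof -
  assume e: "xa * fb = fa * xb" and u: "\<bar>xb\<bar> = 1" "\<bar>fb\<bar> = 1"
  have "xa * xb = xa * xb * (fb * fb)" using sq1[OF u(2)] by simp
  also have "\<dots> = (xa * fb) * xb * fb" by (simp add: algebra_simps)
  also have "\<dots> = fa * fb * (xb * xb)" unfolding e by (simp add: algebra_simps)
  also have "\<dots> = fa * fb" using sq1[OF u(1)] by simp
  finally show ?thesis .
qed

lemma sign_contra:
  fixes xa xb ya yc zb zc fa fb fc :: real
  assumes "\<bar>xa\<bar> = 1" "\<bar>xb\<bar> = 1" "\<bar>ya\<bar> = 1" "\<bar>yc\<bar> = 1" "\<bar>zb\<bar> = 1" "\<bar>zc\<bar> = 1"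
    "\<bar>fa\<bar> = 1" "\<bar>fb\<bar> = 1" "\<bar>fc\<bar> = 1"
    and h1: "\<bar>xa*fb - fa*xb\<bar> \<le> 1" and h2: "\<bar>ya*fc - fa*yc\<bar> \<le> 1" and h3: "\<bar>zb*fc - fb*zc\<bar> \<le> 1"
    and h4: "\<bar>xa*zb*yc + ya*xb*zc\<bar> \<le> 1"
  shows False
proof -
  have e1: "xa * xb = fa * fb" using prod_eq[OF pmeq[OF _ _ h1]] assms by (simp add: abs_mult)
  have e2: "ya * yc = fa * fc" using prod_eq[OF pmeq[OF _ _ h2]] assms by (simp add: abs_mult)
  have e3: "zb * zc = fb * fc" using prod_eq[OF pmeq[OF _ _ h3]] assms by (simp add: abs_mult)
  have h4': "\<bar>xa*zb*yc - (- (ya*xb*zc))\<bar> \<le> 1" using h4 by simp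
  have PQ: "xa*zb*yc = - (ya*xb*zc)" using pmeq[OF _ _ h4'] assms by (simp add: abs_mult)
  have "(xa*zb*yc) * (ya*xb*zc) = (xa*xb)*(ya*yc)*(zb*zc)" by (simp add: algebra_simps)
  also have "\<dots> = (fa*fa)*(fb*fb)*(fc*fc)" unfolding e1 e2 e3 by (simp add: algebra_simps)
  also have "\<dots> = 1" using sq1 assms by simp
  finally have "(xa*zb*yc) * (ya*xb*zc) = 1" .
  moreover have "(ya*xb*zc) * (ya*xb*zc) = 1" using sq1[of "ya*xb*zc"] assms by (simp add: abs_mult)
  ultimately show False unfolding PQ by simp
qed

lemma pick_surj: "finite K \<Longrightarrow> x \<in> K \<Longrightarrow> \<exists>i<card K. pick K i = x"
proof -
  assume f: "finite K" and x: "x \<in> K"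
  have "{a\<in>K. a < x} \<subset> K" using x by auto
  hence "card {a\<in>K. a < x} < card K" using f by (simp add: psubset_card_mono)
  thus ?thesis using pick_card_in_set[OF x] by blast
qed

locale tsetup =
  fixes t :: "real vec" and A :: "real mat" and m n :: nat
  assumes tb: "t \<in> unit_box m" and tA: "ternary_mat m n A" and dc: "distinct_columns A"
    and T: "totally_1_submodular (translate t A)"

context tsetup
begin

lemma dA: "dim_row A = m" "dim_col A = n" using tern_dims[OF tA] by auto

lemma Mdims: "dim_row (translate t A) = m" "dim_col (translate t A) = n"
  using dA translate_dims by auto

lemma Midx: "i < m \<Longrightarrow> j < n \<Longrightarrow> translate t A $$ (i,j) = t $ i + A $$ (i,j)"
  using translate_index dA by auto

lemma t_pos: "i < m \<Longrightarrow> t $ i > 0 \<Longrightarrow> j < n \<Longrightarrow> A $$ (i,j) \<noteq> 1"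
proof
  assume a: "i < m" "t $ i > 0" "j < n" "A $$ (i,j) = 1"
  have "\<bar>translate t A $$ (i,j)\<bar> \<le> 1" using T1[OF T] a Mdims by auto
  thus False using Midx a by auto
qed

lemma t_nonneg: "i < m \<Longrightarrow> t $ i \<ge> 0" using tb unfolding unit_box_def by auto

lemma supp_iff: "j < n \<Longrightarrow> i \<in> col_support A j \<longleftrightarrow> i < m \<and> A $$ (i,j) \<noteq> 0"
  unfolding col_support_def using dA by auto

lemma supp_sub: "col_support A j \<subseteq> {..<m}"
  unfolding col_support_def using dA by auto

definition Z where "Z = {i. i < m \<and> t $ i = 0}"

definition pos where "pos j \<longleftrightarrow> (col_support A j \<inter> Z = {} \<or> A $$ (Min (col_support A j \<inter> Z), j) = 1)"

lemma pm1: "i < m \<Longrightarrow> j < n \<Longrightarrow> A $$ (i,j) \<noteq> 0 \<Longrightarrow> \<bar>A $$ (i,j)\<bar> = 1"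
  using tern_vals[OF tA] by fastforce

lemma same_supp:
  assumes j: "j1 < n" "j2 < n" "j1 \<noteq> j2" and s: "col_support A j1 = col_support A j2"
  shows "pos j1 \<noteq> pos j2"
proof -
  have "col A j1 \<noteq> col A j2" using dc j dA unfolding distinct_columns_def by auto
  then obtain a where a: "a < m" "A $$ (a,j1) \<noteq> A $$ (a,j2)"
    using dA j by (metis col_def dim_vec eq_vecI index_vec)
  have a1: "A $$ (a,j1) \<noteq> 0"
  proof
    assume "A $$ (a,j1) = 0"
    hence "a \<notin> col_support A j2" using s supp_iff j a by auto
    thus False using supp_iff j a \<open>A $$ (a,j1) = 0\<close> by auto
  qed
  have a2: "A $$ (a,j2) \<noteq> 0" using a1 s supp_iff j a by blast
  have opp: "A $$ (a,j2) = - A $$ (a,j1)" using tern_vals[OF tA a(1) j(1)] tern_vals[OF tA a(1) j(2)] a a1 a2 by auto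
  have ta: "t $ a = 0"
  proof (rule ccontr)
    assume "t $ a \<noteq> 0" hence "t $ a > 0" using t_nonneg a by force
    thus False using t_pos[OF a(1)] j opp tern_vals[OF tA a(1) j(1)] a1 by force
  qed
  have aZ: "a \<in> col_support A j1 \<inter> Z" using a ta a1 supp_iff j unfolding Z_def by auto
  define b where "b = Min (col_support A j1 \<inter> Z)"
  have fin: "finite (col_support A j1 \<inter> Z)" using supp_sub finite_subset by (metis finite_Int finite_lessThan)
  have bZ: "b \<in> col_support A j1 \<inter> Z" unfolding b_def using fin aZ by (metis Min_in empty_iff)
  have b: "b < m" "t $ b = 0" "A $$ (b,j1) \<noteq> 0" "A $$ (b,j2) \<noteq> 0" using bZ s supp_iff j unfolding Z_def by auto
  have bopp: "A $$ (b,j2) = - A $$ (b,j1)"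
  proof (rule ccontr)
    assume "A $$ (b,j2) \<noteq> - A $$ (b,j1)"
    hence eq: "A $$ (b,j2) = A $$ (b,j1)" using tern_vals[OF tA b(1) j(1)] tern_vals[OF tA b(1) j(2)] b by auto
    hence "a \<noteq> b" using a by auto
    have "\<bar>translate t A $$ (a,j1) * translate t A $$ (b,j2) - translate t A $$ (a,j2) * translate t A $$ (b,j1)\<bar> \<le> 1"
      using T2[OF T \<open>a \<noteq> b\<close> _ _ j(3)] a b j Mdims by auto
    also have "translate t A $$ (a,j1) * translate t A $$ (b,j2) - translate t A $$ (a,j2) * translate t A $$ (b,j1)
        = A $$ (a,j1) * A $$ (b,j1) + A $$ (a,j1) * A $$ (b,j1)"
      using Midx a b j eq opp ta by simp
    finally show False using abs2[OF pm1[OF a(1) j(1) a1] pm1[OF b(1) j(1) b(3)]] by simp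
  qed
  have "pos j1 \<longleftrightarrow> A $$ (b,j1) = 1" unfolding pos_def b_def using aZ by auto
  moreover have "pos j2 \<longleftrightarrow> A $$ (b,j2) = 1" unfolding pos_def b_def using aZ s by auto
  ultimately show ?thesis using bopp tern_vals[OF tA b(1) j(1)] b(3) by auto
qed

lemma big_class:
  assumes "n > 2 * B"
  shows "\<exists>C. C \<subseteq> {..<n} \<and> card C > B \<and> inj_on (col_support A) C"
proof -
  define C1 where "C1 = {j. j < n \<and> pos j}"
  define C2 where "C2 = {j. j < n \<and> \<not> pos j}"
  have "card C1 + card C2 = n"
  proof -
    have "{..<n} = C1 \<union> C2" "C1 \<inter> C2 = {}" unfolding C1_def C2_def by auto
    moreover have "finite C1" "finite C2" unfolding C1_def C2_def by auto
    ultimately show ?thesis by (metis card_Un_disjoint card_lessThan)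
  qed
  hence "card C1 > B \<or> card C2 > B" using assms by linarith
  moreover have "inj_on (col_support A) C1" unfolding C1_def inj_on_def using same_supp by blast
  moreover have "inj_on (col_support A) C2" unfolding C2_def inj_on_def using same_supp by blast
  moreover have "C1 \<subseteq> {..<n}" "C2 \<subseteq> {..<n}" unfolding C1_def C2_def by auto
  ultimately show ?thesis by blast
qed


lemma sauer_sub:
  assumes K: "K \<subseteq> {..<m}" "card K = k" and c: "\<forall>T\<subseteq>K. c T < n \<and> col_support A (c T) \<inter> K = T"
  shows "sauer_matrix k (submatrix A K (c ` Pow K))"
    "translate (vec k (\<lambda>i. t $ pick K i)) (submatrix A K (c ` Pow K)) = submatrix (translate t A) K (c ` Pow K)"
proof -
  define J where "J = c ` Pow K"
  define S where "S = submatrix A K J"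
  have finK: "finite K" using K(1) finite_subset by blast
  have cinj: "inj_on c (Pow K)"
  proof (rule inj_onI)
    fix T1 T2 assume "T1 \<in> Pow K" "T2 \<in> Pow K" "c T1 = c T2"
    thus "T1 = T2" using c by (metis PowD)
  qed
  have cardJ: "card J = 2^k" unfolding J_def using card_image[OF cinj] card_Pow[of K] K(2) finK by simp
  have Jsub: "J \<subseteq> {..<n}" unfolding J_def using c by auto
  have finJ: "finite J" using Jsub finite_subset by blast
  have crK: "card {i. i < dim_row A \<and> i \<in> K} = k" using card_rows_sub[of K "dim_row A"] K dA by simp
  have crJ: "card {i. i < dim_col A \<and> i \<in> J} = 2^k" using card_rows_sub[of J "dim_col A"] Jsub cardJ dA by simp
  have dS: "dim_row S = k" "dim_col S = 2^k" unfolding S_def dim_submatrix crK crJ by simp_all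
  have gK: "\<And>i. i < k \<Longrightarrow> pick K i \<in> K" using pick_in_set_le K(2) by blast
  have gm: "\<And>i. i < k \<Longrightarrow> pick K i < m" using gK K(1) by blast
  have pJ: "\<And>j. j < 2^k \<Longrightarrow> pick J j \<in> J" using pick_in_set_le cardJ by metis
  have pn: "\<And>j. j < 2^k \<Longrightarrow> pick J j < n" using pJ Jsub by blast
  have Sidx: "\<And>i j. i < k \<Longrightarrow> j < 2^k \<Longrightarrow> S $$ (i,j) = A $$ (pick K i, pick J j)"
    unfolding S_def by (rule submatrix_index) (simp_all only: crK crJ)
  have ginj: "inj_on (pick K) {..<k}" using pick_inj[of K] K(2) by simp
  have tern: "ternary_mat k (2^k) S"
  proof -
    have "S \<in> carrier_mat k (2^k)" using dS by (rule carrier_matI)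
    moreover have "\<forall>i<k. \<forall>j<2^k. S $$ (i,j) \<in> {-1, 0, 1}"
    proof (intro allI impI)
      fix i j :: nat assume ij: "i < k" "j < 2^k"
      show "S $$ (i,j) \<in> {-1, 0, 1}" unfolding Sidx[OF ij] using tern_vals[OF tA gm[OF ij(1)] pn[OF ij(2)]] by blast
    qed
    ultimately show ?thesis unfolding ternary_mat_def by blast
  qed
  have cs: "\<And>j. j < 2^k \<Longrightarrow> \<exists>T. T \<subseteq> K \<and> pick J j = c T \<and> col_support S j = {i. i < k \<and> pick K i \<in> T}"
  proof -
    fix j :: nat assume j: "j < 2^k"
    then obtain T where T: "T \<subseteq> K" "pick J j = c T" using pJ unfolding J_def by blast
    have "col_support S j = {i. i < k \<and> pick K i \<in> T}"
    proof (rule Set.set_eqI)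
      fix i
      show "i \<in> col_support S j \<longleftrightarrow> i \<in> {i. i < k \<and> pick K i \<in> T}"
      proof (cases "i < k")
        case True
        have "i \<in> col_support S j \<longleftrightarrow> A $$ (pick K i, c T) \<noteq> 0"
          unfolding col_support_def using True dS Sidx[OF True j] T by simp
        also have "\<dots> \<longleftrightarrow> pick K i \<in> col_support A (c T)" using supp_iff[of "c T" "pick K i"] c T gm[OF True] by simp
        also have "\<dots> \<longleftrightarrow> pick K i \<in> T" using c T gK[OF True] by blast
        finally show ?thesis using True by simp
      next
        case False thus ?thesis unfolding col_support_def using dS by simp
      qed
    qed
    thus "\<exists>T. T \<subseteq> K \<and> pick J j = c T \<and> col_support S j = {i. i < k \<and> pick K i \<in> T}" using T by blast
  qed
  have Tback: "\<And>T. T \<subseteq> K \<Longrightarrow> pick K ` {i. i < k \<and> pick K i \<in> T} = T"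
  proof -
    fix T assume T: "T \<subseteq> K"
    show "pick K ` {i. i < k \<and> pick K i \<in> T} = T"
    proof
      show "pick K ` {i. i < k \<and> pick K i \<in> T} \<subseteq> T" by auto
      show "T \<subseteq> pick K ` {i. i < k \<and> pick K i \<in> T}"
      proof
        fix x assume "x \<in> T"
        then obtain i where "i < card K" "pick K i = x" using pick_surj[OF finK] T by blast
        thus "x \<in> pick K ` {i. i < k \<and> pick K i \<in> T}" using \<open>x \<in> T\<close> K(2) by blast
      qed
    qed
  qed
  have inj: "inj_on (col_support S) {..<2^k}"
  proof (rule inj_onI)
    fix j1 j2 :: nat assume j: "j1 \<in> {..<2^k}" "j2 \<in> {..<2^k}" "col_support S j1 = col_support S j2"
    obtain T1 where T1: "T1 \<subseteq> K" "pick J j1 = c T1" "col_support S j1 = {i. i < k \<and> pick K i \<in> T1}"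
      using cs j by blast
    obtain T2 where T2: "T2 \<subseteq> K" "pick J j2 = c T2" "col_support S j2 = {i. i < k \<and> pick K i \<in> T2}"
      using cs j by blast
    have "T1 = T2" using Tback[OF T1(1)] Tback[OF T2(1)] T1(3) T2(3) j(3) by simp
    hence "pick J j1 = pick J j2" using T1 T2 by simp
    thus "j1 = j2" using pick_inj[of J] j cardJ unfolding inj_on_def by auto
  qed
  have img: "col_support S ` {..<2^k} = Pow {..<k}"
  proof
    show "col_support S ` {..<2^k} \<subseteq> Pow {..<k}" unfolding col_support_def using dS by auto
    show "Pow {..<k} \<subseteq> col_support S ` {..<2^k}"
    proof
      fix U assume U: "U \<in> Pow {..<k}"
      define T where "T = pick K ` U"
      have TK: "T \<subseteq> K" unfolding T_def using U gK by auto
      have "c T \<in> J" unfolding J_def using TK by auto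
      then obtain j where j: "j < card J" "pick J j = c T" using pick_surj[OF finJ] by blast
      have j2: "j < 2^k" using j cardJ by simp
      obtain T' where T': "T' \<subseteq> K" "pick J j = c T'" "col_support S j = {i. i < k \<and> pick K i \<in> T'}"
        using cs[OF j2] by blast
      have "T' = T" using T' j c TK by metis
      hence "col_support S j = {i. i < k \<and> pick K i \<in> pick K ` U}" using T' T_def by simp
      also have "\<dots> = U" using U ginj unfolding inj_on_def by auto
      finally show "U \<in> col_support S ` {..<2^k}" using j cardJ by force
    qed
  qed
  show "sauer_matrix k (submatrix A K (c ` Pow K))"
    unfolding sauer_matrix_def using tern inj img unfolding S_def J_def bij_betw_def by simp
  show "translate (vec k (\<lambda>i. t $ pick K i)) (submatrix A K (c ` Pow K)) = submatrix (translate t A) K (c ` Pow K)"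
  proof (rule eq_matI)
    have crK': "card {i. i < dim_row (translate t A) \<and> i \<in> K} = k" using crK Mdims dA by simp
    have crJ': "card {i. i < dim_col (translate t A) \<and> i \<in> J} = 2^k" using crJ Mdims dA by simp
    have dT: "dim_row (submatrix (translate t A) K J) = k" "dim_col (submatrix (translate t A) K J) = 2^k"
      unfolding dim_submatrix crK' crJ' by simp_all
    show "dim_row (translate (vec k (\<lambda>i. t $ pick K i)) (submatrix A K (c ` Pow K))) = dim_row (submatrix (translate t A) K (c ` Pow K))"
      using dS dT translate_dims unfolding S_def J_def by simp
    show "dim_col (translate (vec k (\<lambda>i. t $ pick K i)) (submatrix A K (c ` Pow K))) = dim_col (submatrix (translate t A) K (c ` Pow K))"
      using dS dT translate_dims unfolding S_def J_def by simp
    fix i j assume i: "i < dim_row (submatrix (translate t A) K (c ` Pow K))" and j: "j < dim_col (submatrix (translate t A) K (c ` Pow K))"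
    have i': "i < k" and j': "j < 2^k" using i j dT unfolding J_def by simp_all
    have "submatrix (translate t A) K J $$ (i,j) = translate t A $$ (pick K i, pick J j)"
      by (rule submatrix_index) (simp_all only: crK' crJ' i' j')
    also have "\<dots> = t $ pick K i + A $$ (pick K i, pick J j)" using Midx gm[OF i'] pn[OF j'] by simp
    finally show "translate (vec k (\<lambda>i. t $ pick K i)) (submatrix A K (c ` Pow K)) $$ (i, j) = submatrix (translate t A) K (c ` Pow K) $$ (i, j)"
      using translate_index[of i S j] dS Sidx[OF i' j'] i' j' unfolding S_def J_def by simp
  qed
qed

end



context tsetup
begin

lemma three_rows:
  assumes K: "K \<subseteq> {..<m}" "card K \<ge> 3" and c: "\<forall>T\<subseteq>K. c T < n \<and> col_support A (c T) \<inter> K = T"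
    and z: "\<forall>i\<in>K. t $ i = 0"
  shows False
proof -
  define r1 where "r1 = pick K 0"
  define r2 where "r2 = pick K 1"
  define r3 where "r3 = pick K 2"
  have r: "r1 \<in> K" "r2 \<in> K" "r3 \<in> K" unfolding r1_def r2_def r3_def using pick_in_set_le K(2) by auto
  have rl: "r1 < r2" "r2 < r3" unfolding r1_def r2_def r3_def using pick_mono_le K(2) by auto
  have rm: "r1 < m" "r2 < m" "r3 < m" using r K(1) by auto
  have tz: "t $ r1 = 0" "t $ r2 = 0" "t $ r3 = 0" using z r by auto
  have ent: "\<And>T r. T \<subseteq> K \<Longrightarrow> r \<in> K \<Longrightarrow> A $$ (r, c T) \<noteq> 0 \<longleftrightarrow> r \<in> T"
  proof -
    fix T r assume T: "T \<subseteq> K" and rK: "r \<in> K"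
    have "A $$ (r, c T) \<noteq> 0 \<longleftrightarrow> r \<in> col_support A (c T)" using supp_iff[of "c T" r] c T rK K(1) by auto
    also have "\<dots> \<longleftrightarrow> r \<in> T" using c T rK by blast
    finally show "A $$ (r, c T) \<noteq> 0 \<longleftrightarrow> r \<in> T" .
  qed
  have cn: "\<And>T. T \<subseteq> K \<Longrightarrow> c T < n" using c by blast
  have cinj: "\<And>T1 T2. T1 \<subseteq> K \<Longrightarrow> T2 \<subseteq> K \<Longrightarrow> c T1 = c T2 \<Longrightarrow> T1 = T2" using c by metis
  define x where "x = c {r1,r2}"
  define y where "y = c {r1,r3}"
  define zz where "zz = c {r2,r3}"
  define f where "f = c {r1,r2,r3}"
  have sK: "{r1,r2} \<subseteq> K" "{r1,r3} \<subseteq> K" "{r2,r3} \<subseteq> K" "{r1,r2,r3} \<subseteq> K" using r by auto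
  have n: "x < n" "y < n" "zz < n" "f < n" unfolding x_def y_def zz_def f_def using cn sK by auto
  have neq0: "x \<noteq> f"
  proof
    assume "x = f"
    hence "{r1,r2} = {r1,r2,r3}" using cinj[OF sK(1) sK(4)] unfolding x_def f_def by blast
    hence "r3 \<in> {r1,r2} \<longleftrightarrow> r3 \<in> {r1,r2,r3}" by simp
    thus False using rl by auto
  qed
  have neq1: "y \<noteq> f"
  proof
    assume "y = f"
    hence "{r1,r3} = {r1,r2,r3}" using cinj[OF sK(2) sK(4)] unfolding y_def f_def by blast
    hence "r2 \<in> {r1,r3} \<longleftrightarrow> r2 \<in> {r1,r2,r3}" by simp
    thus False using rl by auto
  qed
  have neq2: "zz \<noteq> f"
  proof
    assume "zz = f"
    hence "{r2,r3} = {r1,r2,r3}" using cinj[OF sK(3) sK(4)] unfolding zz_def f_def by blast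
    hence "r1 \<in> {r2,r3} \<longleftrightarrow> r1 \<in> {r1,r2,r3}" by simp
    thus False using rl by auto
  qed
  have neq3: "x \<noteq> y"
  proof
    assume "x = y"
    hence "{r1,r2} = {r1,r3}" using cinj[OF sK(1) sK(2)] unfolding x_def y_def by blast
    hence "r2 \<in> {r1,r2} \<longleftrightarrow> r2 \<in> {r1,r3}" by simp
    thus False using rl by auto
  qed
  have neq4: "y \<noteq> zz"
  proof
    assume "y = zz"
    hence "{r1,r3} = {r2,r3}" using cinj[OF sK(2) sK(3)] unfolding y_def zz_def by blast
    hence "r1 \<in> {r1,r3} \<longleftrightarrow> r1 \<in> {r2,r3}" by simp
    thus False using rl by auto
  qed
  have neq5: "x \<noteq> zz"
  proof
    assume "x = zz"
    hence "{r1,r2} = {r2,r3}" using cinj[OF sK(1) sK(3)] unfolding x_def zz_def by blast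
    hence "r1 \<in> {r1,r2} \<longleftrightarrow> r1 \<in> {r2,r3}" by simp
    thus False using rl by auto
  qed
  note neq = neq0 neq1 neq2 neq3 neq4 neq5
  have nz_x1: "A $$ (r1,x) \<noteq> 0" using ent[OF sK(1) r(1)] rl unfolding x_def by auto
  have nz_x2: "A $$ (r2,x) \<noteq> 0" using ent[OF sK(1) r(2)] rl unfolding x_def by auto
  have nz_x3: "A $$ (r3,x) = 0" using ent[OF sK(1) r(3)] rl unfolding x_def by auto
  have nz_y1: "A $$ (r1,y) \<noteq> 0" using ent[OF sK(2) r(1)] rl unfolding y_def by auto
  have nz_y2: "A $$ (r2,y) = 0" using ent[OF sK(2) r(2)] rl unfolding y_def by auto
  have nz_y3: "A $$ (r3,y) \<noteq> 0" using ent[OF sK(2) r(3)] rl unfolding y_def by auto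
  have nz_zz1: "A $$ (r1,zz) = 0" using ent[OF sK(3) r(1)] rl unfolding zz_def by auto
  have nz_zz2: "A $$ (r2,zz) \<noteq> 0" using ent[OF sK(3) r(2)] rl unfolding zz_def by auto
  have nz_zz3: "A $$ (r3,zz) \<noteq> 0" using ent[OF sK(3) r(3)] rl unfolding zz_def by auto
  have nz_f1: "A $$ (r1,f) \<noteq> 0" using ent[OF sK(4) r(1)] rl unfolding f_def by auto
  have nz_f2: "A $$ (r2,f) \<noteq> 0" using ent[OF sK(4) r(2)] rl unfolding f_def by auto
  have nz_f3: "A $$ (r3,f) \<noteq> 0" using ent[OF sK(4) r(3)] rl unfolding f_def by auto
  note nz = nz_x1 nz_x2 nz_x3 nz_y1 nz_y2 nz_y3 nz_zz1 nz_zz2 nz_zz3 nz_f1 nz_f2 nz_f3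
  have M: "\<And>i j. i \<in> {r1,r2,r3} \<Longrightarrow> j < n \<Longrightarrow> translate t A $$ (i,j) = A $$ (i,j)"
    using Midx rm tz by auto
  have rn: "r1 \<noteq> r2" "r1 \<noteq> r3" "r2 \<noteq> r3" using rl by auto
  have h1: "\<bar>A $$ (r1,x) * A $$ (r2,f) - A $$ (r1,f) * A $$ (r2,x)\<bar> \<le> 1"
    using T2[OF T rn(1) _ _ neq(1)] rm n Mdims M by auto
  have h2: "\<bar>A $$ (r1,y) * A $$ (r3,f) - A $$ (r1,f) * A $$ (r3,y)\<bar> \<le> 1"
    using T2[OF T rn(2) _ _ neq(2)] rm n Mdims M by auto
  have h3: "\<bar>A $$ (r2,zz) * A $$ (r3,f) - A $$ (r2,f) * A $$ (r3,zz)\<bar> \<le> 1"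
    using T2[OF T rn(3) _ _ neq(3)] rm n Mdims M by auto
  have h4: "\<bar>D3 (translate t A) r1 r2 r3 x y zz\<bar> \<le> 1"
    using T3[OF T rl(1) rl(2) _ neq(4) neq(5) neq(6)] rm n Mdims by auto
  have "D3 (translate t A) r1 r2 r3 x y zz = - (A $$ (r1,x) * A $$ (r2,zz) * A $$ (r3,y) + A $$ (r1,y) * A $$ (r2,x) * A $$ (r3,zz))"
    unfolding D3_def using M n nz by (simp add: algebra_simps)
  hence h4': "\<bar>A $$ (r1,x) * A $$ (r2,zz) * A $$ (r3,y) + A $$ (r1,y) * A $$ (r2,x) * A $$ (r3,zz)\<bar> \<le> 1"
    using h4 by simp
  show False
    by (rule sign_contra[OF pm1[OF rm(1) n(1) nz(1)] pm1[OF rm(2) n(1) nz(2)] pm1[OF rm(1) n(2) nz(4)]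
      pm1[OF rm(3) n(2) nz(6)] pm1[OF rm(2) n(3) nz(8)] pm1[OF rm(3) n(3) nz(9)]
      pm1[OF rm(1) n(4) nz(10)] pm1[OF rm(2) n(4) nz(11)] pm1[OF rm(3) n(4) nz(12)] h1 h2 h3 h4'])
qed


lemma extract_sauer:
  assumes big: "n > 2 * (\<Sum>i<k. m choose i)"
  shows "\<exists>S K. sauer_matrix k S \<and> K \<subseteq> {..<m} \<and> card K = k \<and>
     totally_1_submodular (translate (vec k (\<lambda>i. t $ pick K i)) S) \<and> (3 \<le> k \<longrightarrow> (\<exists>i\<in>K. t $ i \<noteq> 0))"
proof -
  obtain C where C: "C \<subseteq> {..<n}" "card C > (\<Sum>i<k. m choose i)" "inj_on (col_support A) C"
    using big_class[OF big] by blast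
  define F where "F = col_support A ` C"
  have cF: "card F > (\<Sum>i<k. card {..<m} choose i)" unfolding F_def using card_image[OF C(3)] C(2) by simp
  have FP: "F \<subseteq> Pow {..<m}" unfolding F_def using supp_sub by auto
  obtain K where K: "K \<subseteq> {..<m}" "card K = k" "shatters F K"
    using sauer_shelah[OF _ FP cF] by blast
  define c where "c = (\<lambda>T. SOME j. j \<in> C \<and> col_support A j \<inter> K = T)"
  have c: "\<forall>T\<subseteq>K. c T < n \<and> col_support A (c T) \<inter> K = T"
  proof (intro allI impI)
    fix T assume "T \<subseteq> K"
    then obtain S where "S \<in> F" "S \<inter> K = T" using K(3) unfolding shatters_def by blast
    hence ex: "\<exists>j. j \<in> C \<and> col_support A j \<inter> K = T" unfolding F_def by blast
    have "c T \<in> C \<and> col_support A (c T) \<inter> K = T" unfolding c_def by (rule someI_ex[OF ex])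
    thus "c T < n \<and> col_support A (c T) \<inter> K = T" using C(1) by auto
  qed
  note ss = sauer_sub[OF K(1,2) c]
  have Jn: "c ` Pow K \<subseteq> {..<dim_col (translate t A)}" using c Mdims by auto
  have Km: "K \<subseteq> {..<dim_row (translate t A)}" using K(1) Mdims by auto
  have tt: "totally_1_submodular (translate (vec k (\<lambda>i. t $ pick K i)) (submatrix A K (c ` Pow K)))"
    unfolding ss(2) by (rule t1s_sub[OF T Km Jn])
  have nz: "3 \<le> k \<longrightarrow> (\<exists>i\<in>K. t $ i \<noteq> 0)"
    using three_rows[OF K(1) _ c] K(2) by auto
  show ?thesis using ss(1) K tt nz by blast
qed

end

definition Sw :: "nat \<Rightarrow> real mat" where
  "Sw k = mat k (2^k) (\<lambda>(i,j). if (i = 0 \<and> odd j) \<or> (i = 1 \<and> 2 \<le> j) then -1 else 0)"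

definition tw :: "nat \<Rightarrow> nat \<Rightarrow> real vec" where
  "tw D k = vec k (\<lambda>i. if i = 0 then 1 / real D else 0)"

lemma t1s_2rows:
  assumes "dim_row M \<le> 2"
    and e: "\<forall>i<dim_row M. \<forall>j<dim_col M. \<bar>M $$ (i,j)\<bar> \<le> (1::real)"
    and mn: "\<forall>a b p q. a < b \<and> b < dim_row M \<and> p < q \<and> q < dim_col M \<longrightarrow>
        \<bar>M $$ (a,p) * M $$ (b,q) - M $$ (a,q) * M $$ (b,p)\<bar> \<le> 1"
  shows "totally_1_submodular M"
  unfolding totally_1_submodular_def
proof (intro allI impI)
  fix I J assume I: "I \<subseteq> {..<dim_row M}" and J: "J \<subseteq> {..<dim_col M}" and cIJ: "card I = card J"
  have fI: "finite I" using I finite_subset by blast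
  have fJ: "finite J" using J finite_subset by blast
  have "card I \<le> 2" using card_mono[OF _ I] assms(1) by simp
  hence "card I = 0 \<or> card I = 1 \<or> card I = 2" by auto
  thus "\<bar>det (submatrix M I J)\<bar> \<le> 1"
  proof (elim disjE)
    assume c0: "card I = 0"
    hence "I = {}" "J = {}" using fI fJ cIJ by auto
    hence "submatrix M I J \<in> carrier_mat 0 0" by (intro carrier_matI) (simp_all add: dim_submatrix)
    thus ?thesis by simp
  next
    assume c1: "card I = 1"
    then obtain i j where ij: "I = {i}" "J = {j}" using cIJ by (metis card_1_singletonE)
    have "i < dim_row M" "j < dim_col M" using ij I J by auto
    thus ?thesis unfolding ij using sub1 e by simp
  next
    assume c2: "card I = 2"
    obtain a b where ab: "I = {a,b}" "a < b"
    proof -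
      obtain x y where "I = {x,y}" "x \<noteq> y" using c2 by (metis card_2_iff)
      thus ?thesis using that by (metis insert_commute linorder_neq_iff)
    qed
    obtain p q where pq: "J = {p,q}" "p < q"
    proof -
      obtain x y where "J = {x,y}" "x \<noteq> y" using c2 cIJ by (metis card_2_iff)
      thus ?thesis using that by (metis insert_commute linorder_neq_iff)
    qed
    have "b < dim_row M" "q < dim_col M" using ab pq I J by auto
    thus ?thesis unfolding ab(1) pq(1) using sub2[OF ab(2) _ pq(2)] mn ab(2) pq(2) by simp
  qed
qed

lemma choose_le_pow': "(n::nat) choose r \<le> n ^ r"
proof (cases "r \<le> n")
  case True thus ?thesis by (rule binomial_le_pow)
next
  case False hence "n < r" by simp
  thus ?thesis by (subst binomial_eq_0) auto
qed

lemma bigO_part: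
  assumes "0 < k"
  shows "(\<lambda>n::nat. real (2 * (\<Sum>i<k. n choose i))) \<in> O(\<lambda>n. real n ^ (k - 1))"
proof (rule bigoI[where c = "2 * real k"])
  show "\<forall>\<^sub>F n in at_top. norm (real (2 * (\<Sum>i<k. n choose i))) \<le> 2 * real k * norm (real n ^ (k - 1))"
  proof (rule eventually_mono[OF eventually_ge_at_top[of 1]])
    fix n :: nat assume n: "1 \<le> n"
    have "(\<Sum>i<k. n choose i) \<le> (\<Sum>i<k. n ^ (k-1))"
    proof (rule sum_mono)
      fix i assume "i \<in> {..<k}"
      hence "i \<le> k - 1" by auto
      hence "n ^ i \<le> n ^ (k-1)" using power_increasing[of i "k-1" n] n by blast
      thus "n choose i \<le> n ^ (k-1)" using choose_le_pow'[of n i] by linarith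
    qed
    also have "\<dots> = k * n ^ (k-1)" by simp
    finally have "real (\<Sum>i<k. n choose i) \<le> real (k * n ^ (k-1))" by (simp only: of_nat_le_iff)
    hence "real (\<Sum>i<k. n choose i) \<le> real k * real n ^ (k-1)" by simp
    thus "norm (real (2 * (\<Sum>i<k. n choose i))) \<le> 2 * real k * norm (real n ^ (k - 1))"
      by (simp add: abs_of_nonneg sum_nonneg)
  qed
qed


lemma tw_props:
  assumes "0 < k" "2 \<le> D"
  shows "tw D k \<in> unit_box k \<inter> grid D k" "tw D k \<noteq> 0\<^sub>v k"
proof -
  have D: "0 < 1 / real D" "1 / real D < 1" using assms(2) by auto
  show "tw D k \<in> unit_box k \<inter> grid D k"
  proof
    show "tw D k \<in> unit_box k" unfolding unit_box_def tw_def using D by auto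
    have "\<forall>i<k. \<exists>z::int. tw D k $ i = real_of_int z / real D"
    proof (intro allI impI)
      fix i assume i: "i < k"
      show "\<exists>z::int. tw D k $ i = real_of_int z / real D"
      proof (cases "i = 0")
        case True thus ?thesis using i by (intro exI[of _ 1]) (simp add: tw_def)
      next
        case False thus ?thesis using i by (intro exI[of _ 0]) (simp add: tw_def)
      qed
    qed
    moreover have "dim_vec (tw D k) = k" unfolding tw_def by simp
    ultimately show "tw D k \<in> grid D k" unfolding grid_def by blast
  qed
  show "tw D k \<noteq> 0\<^sub>v k"
  proof
    assume "tw D k = 0\<^sub>v k"
    hence "tw D k $ 0 = 0\<^sub>v k $ 0" by simp
    thus False unfolding tw_def using assms D by simp
  qed
qed

lemma zero_in:
  assumes "t \<in> unit_box m"
  shows "ternary_mat m 0 (0\<^sub>m m 0) \<and> distinct_columns (0\<^sub>m m 0 :: real mat) \<and> totally_1_submodular (translate t (0\<^sub>m m 0))"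
proof (intro conjI)
  show "ternary_mat m 0 (0\<^sub>m m 0)" unfolding ternary_mat_def by simp
  show "distinct_columns (0\<^sub>m m 0 :: real mat)" unfolding distinct_columns_def by simp
  show "totally_1_submodular (translate t (0\<^sub>m m 0))" unfolding totally_1_submodular_def
  proof (intro allI impI)
    fix I J assume I: "I \<subseteq> {..<dim_row (translate t (0\<^sub>m m 0))}" and J: "J \<subseteq> {..<dim_col (translate t (0\<^sub>m m 0))}"
      and c: "card I = card J"
    have "J = {}" using J translate_dims[of t "0\<^sub>m m 0"] by simp
    moreover have "finite I" using I finite_subset by blast
    ultimately have "I = {}" using c by simp
    hence "submatrix (translate t (0\<^sub>m m 0)) I J \<in> carrier_mat 0 0" using \<open>J = {}\<close>
      by (intro carrier_matI) (simp_all add: dim_submatrix)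
    thus "\<bar>det (submatrix (translate t (0\<^sub>m m 0)) I J)\<bar> \<le> 1" by simp
  qed
qed

lemma Max_bound:
  assumes "\<forall>n\<in>N. n \<le> (B::nat)" "x \<in> N"
  shows "Max N \<le> B"
proof -
  have "finite N" using assms(1) by (meson finite_atMost finite_subset atMost_iff subsetI)
  thus ?thesis using assms Max_le_iff by blast
qed

lemma Sw_idx: "i < k \<Longrightarrow> j < 2^k \<Longrightarrow> Sw k $$ (i,j) = (if (i = 0 \<and> odd j) \<or> (i = 1 \<and> 2 \<le> j) then -1 else 0)"
  unfolding Sw_def by simp

lemma Sw_dims: "dim_row (Sw k) = k" "dim_col (Sw k) = 2^k" unfolding Sw_def by simp_all

lemma witness:
  assumes k: "k = 1 \<or> k = 2" and D: "2 \<le> D"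
  shows "sauer_matrix k (Sw k) \<and> tw D k \<in> unit_box k \<inter> grid D k \<and> tw D k \<noteq> 0\<^sub>v k \<and>
     totally_1_submodular (translate (tw D k) (Sw k))"
proof (intro conjI)
  have k0: "0 < k" using k by auto
  show "tw D k \<in> unit_box k \<inter> grid D k" "tw D k \<noteq> 0\<^sub>v k" using tw_props[OF k0 D] by auto
  have tern: "ternary_mat k (2^k) (Sw k)"
  proof -
    have "Sw k \<in> carrier_mat k (2^k)" using Sw_dims by (intro carrier_matI)
    moreover have "\<forall>i<k. \<forall>j<2^k. Sw k $$ (i,j) \<in> {-1, 0, 1}" using Sw_idx by simp
    ultimately show ?thesis unfolding ternary_mat_def by blast
  qed
  have cs: "\<And>j. j < 2^k \<Longrightarrow> col_support (Sw k) j = {i. i < k \<and> ((i = 0 \<and> odd j) \<or> (i = 1 \<and> 2 \<le> j))}"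
    unfolding col_support_def using Sw_dims Sw_idx by (auto split: if_splits)
  show "sauer_matrix k (Sw k)"
    unfolding sauer_matrix_def
  proof (intro conjI tern)
    show "bij_betw (col_support (Sw k)) {..<2^k} (Pow {..<k})"
      using k
    proof
      assume k1: "k = 1"
      have e: "{..<2^k} = {0, 1::nat}" "Pow {..<k} = {{}, {0::nat}}" using k1 by (auto simp: lessThan_Suc)
      have c0: "col_support (Sw k) 0 = {}" and c1: "col_support (Sw k) 1 = {0}" using cs[of 0] cs[of 1] k1 by auto
      show ?thesis unfolding bij_betw_def e using c0 c1 by auto
    next
      assume k2: "k = 2"
      have e: "{..<2^k} = {0, 1, 2, 3::nat}" "Pow {..<k} = {{}, {0::nat}, {1}, {0,1}}"
        using k2 by (auto simp: lessThan_Suc numeral_eq_Suc Pow_insert)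
      have c0: "col_support (Sw k) 0 = {}" and c1: "col_support (Sw k) 1 = {0}"
        and c2: "col_support (Sw k) 2 = {1}" and c3: "col_support (Sw k) 3 = {0,1}"
        using cs[of 0] cs[of 1] cs[of 2] cs[of 3] k2 by auto
      show ?thesis unfolding bij_betw_def e using c0 c1 c2 c3 by auto
    qed
  qed
  define \<tau> where "\<tau> = 1 / real D"
  have tau: "0 < \<tau>" "\<tau> \<le> 1/2" unfolding \<tau>_def using D by (auto simp: field_simps)
  have idx: "\<And>i j. i < k \<Longrightarrow> j < 2^k \<Longrightarrow> translate (tw D k) (Sw k) $$ (i,j) =
      (if i = 0 then \<tau> else 0) + (if (i = 0 \<and> odd j) \<or> (i = 1 \<and> 2 \<le> j) then -1 else 0)"
    using translate_index Sw_dims Sw_idx unfolding tw_def \<tau>_def by simp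
  have dT: "dim_row (translate (tw D k) (Sw k)) = k" "dim_col (translate (tw D k) (Sw k)) = 2^k"
    using translate_dims Sw_dims by auto
  show "totally_1_submodular (translate (tw D k) (Sw k))"
  proof (rule t1s_2rows)
    show "dim_row (translate (tw D k) (Sw k)) \<le> 2" using dT k by auto
    show "\<forall>i<dim_row (translate (tw D k) (Sw k)). \<forall>j<dim_col (translate (tw D k) (Sw k)). \<bar>translate (tw D k) (Sw k) $$ (i, j)\<bar> \<le> 1"
      unfolding dT using idx tau by auto
    show "\<forall>a b p q. a < b \<and> b < dim_row (translate (tw D k) (Sw k)) \<and> p < q \<and> q < dim_col (translate (tw D k) (Sw k)) \<longrightarrow>
        \<bar>translate (tw D k) (Sw k) $$ (a, p) * translate (tw D k) (Sw k) $$ (b, q) -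
         translate (tw D k) (Sw k) $$ (a, q) * translate (tw D k) (Sw k) $$ (b, p)\<bar> \<le> 1"
    proof (intro allI impI)
      fix a b p q :: nat
      assume h: "a < b \<and> b < dim_row (translate (tw D k) (Sw k)) \<and> p < q \<and> q < dim_col (translate (tw D k) (Sw k))"
      hence ab: "a = 0" "b = 1" "k = 2" using dT k by auto
      have q4: "q < 4" using h dT ab by simp
      have pq: "(p = 0 \<and> q = 1) \<or> (p = 0 \<and> q = 2) \<or> (p = 0 \<and> q = 3) \<or> (p = 1 \<and> q = 2) \<or> (p = 1 \<and> q = 3) \<or> (p = 2 \<and> q = 3)"
        using h q4 by auto
      have pk: "p < 2^k" "q < 2^k" using h dT by auto
      show "\<bar>translate (tw D k) (Sw k) $$ (a, p) * translate (tw D k) (Sw k) $$ (b, q) -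
         translate (tw D k) (Sw k) $$ (a, q) * translate (tw D k) (Sw k) $$ (b, p)\<bar> \<le> 1"
      proof -
        have k0: "0 < k" "1 < k" using ab by auto
        have e1: "translate (tw D k) (Sw k) $$ (0,p) = \<tau> + (if odd p then -1 else 0)" using idx[OF k0(1) pk(1)] by simp
        have e2: "translate (tw D k) (Sw k) $$ (0,q) = \<tau> + (if odd q then -1 else 0)" using idx[OF k0(1) pk(2)] by simp
        have e3: "translate (tw D k) (Sw k) $$ (1,p) = (if 2 \<le> p then -1 else 0)" using idx[OF k0(2) pk(1)] by simp
        have e4: "translate (tw D k) (Sw k) $$ (1,q) = (if 2 \<le> q then -1 else 0)" using idx[OF k0(2) pk(2)] by simp
        show ?thesis unfolding ab(1) ab(2) e1 e2 e3 e4 using pq tau by auto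
      qed
    qed
  qed
qed

theorem proposition3p4:
  fixes m k \<Delta> :: nat
  assumes "0 < k" "k < m" "0 < \<Delta>"
  shows "((\<not> (\<exists>S. sauer_matrix k S \<and> feasible_for_translations S)) \<longrightarrow>
            h\<^sub>s m \<le> 2 * (\<Sum>i<k. m choose i))
       \<and> ((2 \<le> \<Delta> \<and> \<not> (\<exists>S t. sauer_matrix k S \<and> t \<in> unit_box k \<inter> grid \<Delta> k \<and> t \<noteq> 0\<^sub>v k \<and>
                         totally_1_submodular (translate t S))) \<longrightarrow>
            shifted_heller_delta \<Delta> m \<le> 2 * (\<Sum>i<k. m choose i))
       \<and> (\<lambda>n::nat. real (2 * (\<Sum>i<k. n choose i))) \<in> O(\<lambda>n. real n ^ (k - 1))"
proof (intro conjI impI)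
  have m0: "0 < m" using assms by simp
  show "(\<lambda>n::nat. real (2 * (\<Sum>i<k. n choose i))) \<in> O(\<lambda>n. real n ^ (k - 1))"
    using bigO_part[OF assms(1)] .
  show "h\<^sub>s m \<le> 2 * (\<Sum>i<k. m choose i)" if H: "\<not> (\<exists>S. sauer_matrix k S \<and> feasible_for_translations S)"
    unfolding shifted_heller_def
  proof (rule Max_bound)
    show "\<forall>n\<in>{n. \<exists>t A. t \<in> unit_box m \<and> t \<noteq> 0\<^sub>v m \<and> ternary_mat m n A \<and> distinct_columns A \<and> totally_1_submodular (translate t A)}.
        n \<le> 2 * (\<Sum>i<k. m choose i)"
    proof
      fix n assume "n \<in> {n. \<exists>t A. t \<in> unit_box m \<and> t \<noteq> 0\<^sub>v m \<and> ternary_mat m n A \<and> distinct_columns A \<and> totally_1_submodular (translate t A)}"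
      then obtain t A where hyp: "t \<in> unit_box m" "t \<noteq> 0\<^sub>v m" "ternary_mat m n A" "distinct_columns A" "totally_1_submodular (translate t A)"
        by blast
      show "n \<le> 2 * (\<Sum>i<k. m choose i)"
      proof (rule ccontr)
        assume "\<not> n \<le> 2 * (\<Sum>i<k. m choose i)"
        hence big: "n > 2 * (\<Sum>i<k. m choose i)" by simp
        interpret tsetup t A m n using hyp by unfold_locales
        obtain S K where SK: "sauer_matrix k S" "K \<subseteq> {..<m}" "card K = k"
          "totally_1_submodular (translate (vec k (\<lambda>i. t $ pick K i)) S)"
          using extract_sauer[OF big] by blast
        have dS: "dim_row S = k" using SK(1) unfolding sauer_matrix_def ternary_mat_def by auto
        have pm: "\<And>i. i < k \<Longrightarrow> pick K i < m" using pick_in_set_le SK(2,3) by blast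
        have "vec k (\<lambda>i. t $ pick K i) \<in> unit_box k"
          using hyp(1) pm unfolding unit_box_def by auto
        hence "feasible (vec k (\<lambda>i. t $ pick K i)) S" unfolding feasible_def dS using SK(4) by simp
        thus False using H SK(1) unfolding feasible_for_translations_def by blast
      qed
    qed
    have t2: "tw 2 m \<in> unit_box m" "tw 2 m \<noteq> 0\<^sub>v m" using tw_props[OF m0, of 2] by auto
    show "0 \<in> {n. \<exists>t A. t \<in> unit_box m \<and> t \<noteq> 0\<^sub>v m \<and> ternary_mat m n A \<and> distinct_columns A \<and> totally_1_submodular (translate t A)}"
      using t2 zero_in[OF t2(1)] by blast
  qed
  show "shifted_heller_delta \<Delta> m \<le> 2 * (\<Sum>i<k. m choose i)"
    if H: "2 \<le> \<Delta> \<and> \<not> (\<exists>S t. sauer_matrix k S \<and> t \<in> unit_box k \<inter> grid \<Delta> k \<and> t \<noteq> 0\<^sub>v k \<and>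
                         totally_1_submodular (translate t S))"
  proof (cases "k \<le> 2")
    case True
    hence "k = 1 \<or> k = 2" using assms by auto
    thus ?thesis using witness[of k \<Delta>] H by blast
  next
    case False
    hence k3: "3 \<le> k" by simp
    show ?thesis
      unfolding shifted_heller_delta_def
    proof (rule Max_bound)
      show "\<forall>n\<in>{n. \<exists>t A. t \<in> unit_box m \<inter> grid \<Delta> m \<and> t \<noteq> 0\<^sub>v m \<and> ternary_mat m n A \<and> distinct_columns A \<and> totally_1_submodular (translate t A)}.
          n \<le> 2 * (\<Sum>i<k. m choose i)"
      proof
        fix n assume "n \<in> {n. \<exists>t A. t \<in> unit_box m \<inter> grid \<Delta> m \<and> t \<noteq> 0\<^sub>v m \<and> ternary_mat m n A \<and> distinct_columns A \<and> totally_1_submodular (translate t A)}"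
        then obtain t A where hyp: "t \<in> unit_box m" "t \<in> grid \<Delta> m" "t \<noteq> 0\<^sub>v m" "ternary_mat m n A" "distinct_columns A" "totally_1_submodular (translate t A)"
          by blast
        show "n \<le> 2 * (\<Sum>i<k. m choose i)"
        proof (rule ccontr)
          assume "\<not> n \<le> 2 * (\<Sum>i<k. m choose i)"
          hence big: "n > 2 * (\<Sum>i<k. m choose i)" by simp
          interpret tsetup t A m n using hyp by unfold_locales
          obtain S K where SK: "sauer_matrix k S" "K \<subseteq> {..<m}" "card K = k"
            "totally_1_submodular (translate (vec k (\<lambda>i. t $ pick K i)) S)" "\<exists>i\<in>K. t $ i \<noteq> 0"
            using extract_sauer[OF big] k3 by blast
          have pm: "\<And>i. i < k \<Longrightarrow> pick K i < m" using pick_in_set_le SK(2,3) by blast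
          have u: "vec k (\<lambda>i. t $ pick K i) \<in> unit_box k"
            using hyp(1) pm unfolding unit_box_def by auto
          have g: "vec k (\<lambda>i. t $ pick K i) \<in> grid \<Delta> k"
            using hyp(2) pm unfolding grid_def by auto
          obtain i where i: "i \<in> K" "t $ i \<noteq> 0" using SK(5) by blast
          have finK: "finite K" using SK(2) finite_subset by blast
          obtain j where j: "j < k" "pick K j = i" using pick_surj[OF finK i(1)] SK(3) by blast
          have "vec k (\<lambda>i. t $ pick K i) \<noteq> 0\<^sub>v k"
          proof
            assume "vec k (\<lambda>i. t $ pick K i) = 0\<^sub>v k"
            hence "vec k (\<lambda>i. t $ pick K i) $ j = 0\<^sub>v k $ j" by simp
            thus False using j i by simp
          qed
          thus False using H SK(1,4) u g by blast
        qed
      qed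
      have t2: "tw \<Delta> m \<in> unit_box m \<inter> grid \<Delta> m" "tw \<Delta> m \<noteq> 0\<^sub>v m" using tw_props[OF m0] H by auto
      show "0 \<in> {n. \<exists>t A. t \<in> unit_box m \<inter> grid \<Delta> m \<and> t \<noteq> 0\<^sub>v m \<and> ternary_mat m n A \<and> distinct_columns A \<and> totally_1_submodular (translate t A)}"
        using t2 zero_in[of "tw \<Delta> m" m] by blast
    qed
  qed
qed


end
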